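(* For all $\varepsilon>0$ and $\delta\in[0,1)$, if $P$ and $Q$ are $(\varepsilon,\delta)$-indistinguishable probability distributions, then \[ B(P,Q)\le \ln\Big(\frac{e^{\varepsilon/2}+e^{-\varepsilon/2}}{2}\Big)+\ln\Big(\frac1{1-\delta}\Big)\le\min\Big\{\frac{\varepsilon^2}{8},\frac{\varepsilon}{2}\Big\}+\frac{\delta}{1-\delta}. \]
   Context: Distributions $P,Q$ (on a common space) are $(\varepsilon,\delta)$-indistinguishable if for every event $Y$, $P(Y)\le e^\varepsilon Q(Y)+\delta$ and $Q(Y)\le e^\varepsilon P(Y)+\delta$. The Bhattacharyya coefficient is $\mathrm{BC}(P\|Q)=\int\sqrt{P(x)Q(x)}\,dx$ (densities w.r.t. a common dominating measure) and the Bhattacharyya distance is $B(P,Q)=-\ln\mathrm{BC}(P\|Q)$. *)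

theory Defs
  imports "HOL-Probability.Probability"
begin

definition indist :: "real \<Rightarrow> real \<Rightarrow> 'a measure \<Rightarrow> 'a measure \<Rightarrow> bool" where
  "indist \<epsilon> \<delta> P Q \<longleftrightarrow> sets P = sets Q \<and>
     (\<forall>Y \<in> sets P. measure P Y \<le> exp \<epsilon> * measure Q Y + \<delta> \<and>
                    measure Q Y \<le> exp \<epsilon> * measure P Y + \<delta>)"

definition bhatt_coeff :: "'a measure \<Rightarrow> ('a \<Rightarrow> real) \<Rightarrow> ('a \<Rightarrow> real) \<Rightarrow> real" where
  "bhatt_coeff M p q = (\<integral>x. sqrt (p x * q x) \<partial>M)"

definition bhatt_dist :: "'a measure \<Rightarrow> ('a \<Rightarrow> real) \<Rightarrow> ('a \<Rightarrow> real) \<Rightarrow> real" where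
  "bhatt_dist M p q = - ln (bhatt_coeff M p q)"

end

theory Submission imports Defs begin


lemma pw:
  fixes a b u :: real
  assumes a0: "0 \<le> a" and b0: "0 \<le> b" and u1: "1 \<le> u"
  shows "a^2 + b^2 - (if a^2 > u^2*b^2 then a^2 - u^2*b^2 else 0)
           - (if b^2 > u^2*a^2 then b^2 - u^2*a^2 else 0) \<le> (u + 1/u) * (a*b)"
proof -
  have u0: "u > 0" using u1 by linarith
  have u2: "1 \<le> u^2" using u1 by (simp add: one_le_power)
  have ua: "a^2 \<le> u^2*a^2" using mult_right_mono[OF u2 zero_le_power2[of a]] by linarith
  have ub: "b^2 \<le> u^2*b^2" using mult_right_mono[OF u2 zero_le_power2[of b]] by linarith
  have sa: "(u*a)^2 = u^2*a^2" and sb: "(u*b)^2 = u^2*b^2" by (simp_all add: power_mult_distrib)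
  have ua0: "0 \<le> u*a" and ub0: "0 \<le> u*b" using u0 a0 b0 by simp_all
  have key: "(u + 1/u) * (a*b) = ((u^2+1)*(a*b))/u" using u0 by (simp add: field_simps power2_eq_square)
  consider "a^2 > u^2*b^2" | "b^2 > u^2*a^2" | "a^2 \<le> u^2*b^2" "b^2 \<le> u^2*a^2" by linarith
  then show ?thesis
  proof cases
    case 1
    hence ab: "u*b \<le> a" using power2_le_imp_le[of "u*b" a] a0 sb by linarith
    have nb: "\<not> b^2 > u^2*a^2" using 1 ua ub by linarith
    have "u*b*b \<le> a*b" using mult_right_mono[OF ab b0] .
    hence "(u^2+1) * (u*b*b) \<le> (u^2+1)*(a*b)" by (intro mult_left_mono) auto
    hence "((u^2+1) * (u*b*b))/u \<le> ((u^2+1)*(a*b))/u" using u0 by (intro divide_right_mono) auto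
    moreover have "((u^2+1) * (u*b*b))/u = b^2 + u^2*b^2"
      using u0 by (simp add: field_simps power2_eq_square)
    ultimately have "b^2 + u^2*b^2 \<le> (u + 1/u) * (a*b)" using key by linarith
    then show ?thesis using 1 nb by simp
  next
    case 2
    hence ab: "u*a \<le> b" using power2_le_imp_le[of "u*a" b] b0 sa by linarith
    have nb: "\<not> a^2 > u^2*b^2" using 2 ua ub by linarith
    have "u*a*a \<le> b*a" using mult_right_mono[OF ab a0] .
    hence "(u^2+1) * (u*a*a) \<le> (u^2+1)*(a*b)" by (intro mult_left_mono) (auto simp: mult.commute)
    hence "((u^2+1) * (u*a*a))/u \<le> ((u^2+1)*(a*b))/u" using u0 by (intro divide_right_mono) auto
    moreover have "((u^2+1) * (u*a*a))/u = a^2 + u^2*a^2"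
      using u0 by (simp add: field_simps power2_eq_square)
    ultimately have "a^2 + u^2*a^2 \<le> (u + 1/u) * (a*b)" using key by linarith
    then show ?thesis using 2 nb by simp
  next
    case 3
    have h1: "a \<le> u*b" using power2_le_imp_le[of a "u*b"] ub0 sb 3 by linarith
    have h2: "b \<le> u*a" using power2_le_imp_le[of b "u*a"] ua0 sa 3 by linarith
    have pr: "0 \<le> (u*b - a) * (u*a - b)" using h1 h2 by simp
    have "(u + 1/u) * (a*b) - (a^2+b^2) = ((u*b - a) * (u*a - b))/u"
      using u0 by (simp add: field_simps power2_eq_square)
    moreover have "((u*b - a) * (u*a - b))/u \<ge> 0" using pr u0 by simp
    ultimately have "a^2+b^2 \<le> (u + 1/u) * (a*b)" by linarith
    then show ?thesis using 3 by simp
  qed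
qed

lemma sinh_le: fixes t :: real assumes "0 \<le> t" shows "sinh t \<le> t * cosh t"
proof -
  have "0 * cosh 0 - sinh 0 \<le> t * cosh t - sinh t"
  proof (rule DERIV_nonneg_imp_nondecreasing[OF assms, where f = "\<lambda>t. t * cosh t - sinh t"])
    fix x :: real assume "0 \<le> x"
    have "DERIV (\<lambda>t. t * cosh t - sinh t) x :> (1 * cosh x + x * sinh x - cosh x)"
      by (auto intro!: derivative_eq_intros)
    moreover have "0 \<le> x * sinh x" using \<open>0 \<le> x\<close> by simp
    ultimately show "\<exists>y. DERIV (\<lambda>t. t * cosh t - sinh t) x :> y \<and> y \<ge> 0" by force
  qed
  thus ?thesis by simp
qed

lemma lncosh: fixes t :: real assumes "0 \<le> t" shows "ln (cosh t) \<le> t^2/2"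
proof -
  have "ln (cosh t) - t^2/2 \<le> ln (cosh 0) - 0^2/2"
  proof (rule DERIV_nonpos_imp_nonincreasing[OF assms, where f = "\<lambda>t. ln (cosh t) - t^2/2"])
    fix x :: real assume "0 \<le> x"
    have "DERIV (\<lambda>t. ln (cosh t) - t^2/2) x :> (sinh x / cosh x - x)"
      by (auto intro!: derivative_eq_intros simp: field_simps power2_eq_square)
    moreover have "sinh x / cosh x - x \<le> 0" using sinh_le[OF \<open>0 \<le> x\<close>]
      by (simp add: divide_le_eq)
    ultimately show "\<exists>y. DERIV (\<lambda>t. ln (cosh t) - t^2/2) x :> y \<and> y \<le> 0" by force
  qed
  thus ?thesis by simp
qed

lemma density_facts:
  fixes M :: "'a measure" and p :: "'a \<Rightarrow> real"
  assumes pm: "p \<in> borel_measurable M" and nn: "\<forall>x \<in> space M. 0 \<le> p x"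
    and ps: "prob_space (density M (\<lambda>x. ennreal (p x)))"
  shows "integrable M p" "integral\<^sup>L M p = 1"
    "\<And>S. S \<in> sets M \<Longrightarrow> measure (density M (\<lambda>x. ennreal (p x))) S = integral\<^sup>L M (\<lambda>x. p x * indicator S x)"
    "\<And>S. S \<in> sets M \<Longrightarrow> integrable M (\<lambda>x. p x * indicator S x)"
proof -
  interpret P: prob_space "density M (\<lambda>x. ennreal (p x))" by (rule ps)
  have ae: "AE x in M. 0 \<le> p x" by (rule AE_I2) (use nn in blast)
  have i1: "integrable (density M (\<lambda>x. ennreal (p x))) (\<lambda>_. 1::real)" by (rule P.integrable_const)
  have e1: "integrable (density M (\<lambda>x. ennreal (p x))) (\<lambda>_. 1::real) = integrable M (\<lambda>x. p x *\<^sub>R (1::real))"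
    by (rule integrable_density[OF borel_measurable_const pm ae])
  show "integrable M p" using i1 e1 by simp
  have "integral\<^sup>L (density M (\<lambda>x. ennreal (p x))) (\<lambda>_. 1::real) = 1"
  proof -
    have "integral\<^sup>L (density M (\<lambda>x. ennreal (p x))) (\<lambda>_. 1::real) = 
       measure (density M (\<lambda>x. ennreal (p x))) (space (density M (\<lambda>x. ennreal (p x)))) *\<^sub>R 1"
      by (rule lebesgue_integral_const)
    thus ?thesis using P.prob_space by (simp only: scaleR_one)
  qed
  moreover have "integral\<^sup>L (density M (\<lambda>x. ennreal (p x))) (\<lambda>_. 1::real) = integral\<^sup>L M (\<lambda>x. p x *\<^sub>R (1::real))"
    by (rule integral_density[OF borel_measurable_const pm ae])
  ultimately show "integral\<^sup>L M p = 1" by simp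
  fix S assume S: "S \<in> sets M"
  have S': "S \<in> sets (density M (\<lambda>x. ennreal (p x)))" using S by (simp only: sets_density)
  have hb: "has_bochner_integral (density M (\<lambda>x. ennreal (p x))) (indicator S :: 'a \<Rightarrow> real) (measure (density M (\<lambda>x. ennreal (p x))) S)"
    by (rule has_bochner_integral_real_indicator[OF S']) (simp add: less_top[symmetric])
  have "integrable (density M (\<lambda>x. ennreal (p x))) (indicator S :: 'a \<Rightarrow> real)"
    using hb integrable.intros by blast
  thus "integrable M (\<lambda>x. p x * indicator S x)"
    using integrable_density[of "indicator S :: 'a \<Rightarrow> real" M p, OF borel_measurable_indicator[OF S] pm ae]
    by (simp only: real_scaleR_def)
  have "integral\<^sup>L (density M (\<lambda>x. ennreal (p x))) (indicator S :: 'a \<Rightarrow> real)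
        = measure (density M (\<lambda>x. ennreal (p x))) S"
    using hb by (rule has_bochner_integral_integral_eq)
  thus "measure (density M (\<lambda>x. ennreal (p x))) S = integral\<^sup>L M (\<lambda>x. p x * indicator S x)"
    using integral_density[of "indicator S :: 'a \<Rightarrow> real" M p, OF borel_measurable_indicator[OF S] pm ae]
    by (simp only: real_scaleR_def)
qed

theorem lemma5p3:
  fixes M :: "'a measure" and p q :: "'a \<Rightarrow> real" and \<epsilon> \<delta> :: real
  assumes "\<epsilon> > 0" and "0 \<le> \<delta>" and "\<delta> < 1"
    and "p \<in> borel_measurable M" and "q \<in> borel_measurable M"
    and "\<And>x. x \<in> space M \<Longrightarrow> 0 \<le> p x" and "\<And>x. x \<in> space M \<Longrightarrow> 0 \<le> q x"
    and "prob_space (density M (\<lambda>x. ennreal (p x)))"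
    and "prob_space (density M (\<lambda>x. ennreal (q x)))"
    and "indist \<epsilon> \<delta> (density M (\<lambda>x. ennreal (p x))) (density M (\<lambda>x. ennreal (q x)))"
  shows "bhatt_dist M p q \<le> ln ((exp (\<epsilon>/2) + exp (-\<epsilon>/2)) / 2) + ln (1 / (1 - \<delta>))
       \<and> ln ((exp (\<epsilon>/2) + exp (-\<epsilon>/2)) / 2) + ln (1 / (1 - \<delta>))
           \<le> min (\<epsilon>\<^sup>2 / 8) (\<epsilon> / 2) + \<delta> / (1 - \<delta>)"
proof -
  note [measurable] = assms(4,5)
  define P where "P = density M (\<lambda>x. ennreal (p x))"
  define Q where "Q = density M (\<lambda>x. ennreal (q x))"
  define e where "e = exp \<epsilon>"
  define u where "u = exp (\<epsilon>/2)"
  define C where "C = exp (\<epsilon>/2) + exp (-\<epsilon>/2)"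
  have u1: "1 \<le> u" unfolding u_def using assms(1) by simp
  have u0: "0 < u" using u1 by simp
  have ue: "u^2 = e" unfolding u_def e_def by (simp add: exp_double[symmetric] power2_eq_square exp_add[symmetric])
  have Cu: "C = u + 1/u" unfolding C_def u_def by (simp add: exp_minus field_simps)
  have Cpos: "C > 0" unfolding C_def by (simp add: add_pos_pos)
  have pnn: "\<forall>x\<in>space M. 0 \<le> p x" and qnn: "\<forall>x\<in>space M. 0 \<le> q x" using assms(6,7) by auto
  note Pf = density_facts[of p M, OF assms(4) pnn assms(8), folded P_def]
  note Qf = density_facts[of q M, OF assms(5) qnn assms(9), folded Q_def]
  define S1 where "S1 = {x\<in>space M. e * q x < p x}"
  define S2 where "S2 = {x\<in>space M. e * p x < q x}"
  have S1[measurable]: "S1 \<in> sets M" unfolding S1_def by measurable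
  have S2[measurable]: "S2 \<in> sets M" unfolding S2_def by measurable
  have ind: "sets P = sets M" "\<And>Y. Y \<in> sets M \<Longrightarrow> measure P Y \<le> e * measure Q Y + \<delta>"
     "\<And>Y. Y \<in> sets M \<Longrightarrow> measure Q Y \<le> e * measure P Y + \<delta>"
    using assms(10) unfolding indist_def P_def Q_def e_def by auto
  have d1: "integral\<^sup>L M (\<lambda>x. p x * indicator S1 x) \<le> e * integral\<^sup>L M (\<lambda>x. q x * indicator S1 x) + \<delta>"
    using ind(2)[OF S1] Pf(3)[OF S1] Qf(3)[OF S1] by simp
  have d2: "integral\<^sup>L M (\<lambda>x. q x * indicator S2 x) \<le> e * integral\<^sup>L M (\<lambda>x. p x * indicator S2 x) + \<delta>"
    using ind(3)[OF S2] Pf(3)[OF S2] Qf(3)[OF S2] by simp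
  define f where "f = (\<lambda>x. (p x + q x) - (p x * indicator S1 x - e * (q x * indicator S1 x))
                          - (q x * indicator S2 x - e * (p x * indicator S2 x)))"
  have fi: "integrable M f" unfolding f_def
    using Pf(1) Pf(4)[OF S1] Pf(4)[OF S2] Qf(1) Qf(4)[OF S1] Qf(4)[OF S2] by auto
  have fint: "integral\<^sup>L M f = (integral\<^sup>L M p + integral\<^sup>L M q)
      - (integral\<^sup>L M (\<lambda>x. p x * indicator S1 x) - e * integral\<^sup>L M (\<lambda>x. q x * indicator S1 x))
      - (integral\<^sup>L M (\<lambda>x. q x * indicator S2 x) - e * integral\<^sup>L M (\<lambda>x. p x * indicator S2 x))"
    unfolding f_def
    using Pf(1) Pf(4)[OF S1] Pf(4)[OF S2] Qf(1) Qf(4)[OF S1] Qf(4)[OF S2] by simp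
  have fge: "integral\<^sup>L M f \<ge> 2 - 2 * \<delta>" using fint d1 d2 Pf(2) Qf(2) by simp
  have sqi: "integrable M (\<lambda>x. sqrt (p x * q x))"
  proof (rule Bochner_Integration.integrable_bound[where f = "\<lambda>x. p x + q x"])
    show "integrable M (\<lambda>x. p x + q x)" using Pf(1) Qf(1) by simp
    show "(\<lambda>x. sqrt (p x * q x)) \<in> borel_measurable M" by measurable
    show "AE x in M. norm (sqrt (p x * q x)) \<le> norm (p x + q x)"
    proof (rule AE_I2)
      fix x assume x: "x \<in> space M"
      have "p x * q x \<le> (p x + q x)^2" using assms(6,7)[OF x] by (simp add: power2_eq_square algebra_simps)
      hence "sqrt (p x * q x) \<le> sqrt ((p x + q x)^2)" by (rule real_sqrt_le_mono)
      thus "norm (sqrt (p x * q x)) \<le> norm (p x + q x)" using assms(6,7)[OF x] by simp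
    qed
  qed
  have pwx: "f x \<le> C * sqrt (p x * q x)" if x: "x \<in> space M" for x
  proof -
    have a: "(sqrt (p x))^2 = p x" "(sqrt (q x))^2 = q x" using assms(6,7)[OF x] by simp_all
    have sq: "sqrt (p x * q x) = sqrt (p x) * sqrt (q x)" by (simp add: real_sqrt_mult)
    have fx: "f x = (sqrt (p x))^2 + (sqrt (q x))^2
        - (if (sqrt (p x))^2 > u^2*(sqrt (q x))^2 then (sqrt (p x))^2 - u^2*(sqrt (q x))^2 else 0)
        - (if (sqrt (q x))^2 > u^2*(sqrt (p x))^2 then (sqrt (q x))^2 - u^2*(sqrt (p x))^2 else 0)"
      unfolding a ue f_def S1_def S2_def using x by (simp add: indicator_def algebra_simps)
    have "f x \<le> (u + 1/u) * (sqrt (p x) * sqrt (q x))"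
      unfolding fx by (rule pw) (use u1 assms(6,7)[OF x] in auto)
    thus ?thesis using sq Cu by simp
  qed
  have "integral\<^sup>L M f \<le> integral\<^sup>L M (\<lambda>x. C * sqrt (p x * q x))"
    by (rule integral_mono) (use fi sqi pwx in auto)
  also have "\<dots> = C * bhatt_coeff M p q" unfolding bhatt_coeff_def by simp
  finally have BC: "2 - 2 * \<delta> \<le> C * bhatt_coeff M p q" using fge by simp
  have BC2: "2 * (1 - \<delta>) / C \<le> bhatt_coeff M p q" using BC Cpos by (simp add: field_simps)
  have pos: "0 < 2 * (1 - \<delta>) / C" using Cpos assms(3) by simp
  have "ln (2 * (1 - \<delta>) / C) \<le> ln (bhatt_coeff M p q)" using BC2 pos by simp
  moreover have "ln (2 * (1 - \<delta>) / C) = - (ln (C / 2) + ln (1 / (1 - \<delta>)))"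
  proof -
    have "ln (2 * (1 - \<delta>)) = ln 2 + ln (1 - \<delta>)" using assms(3) by (intro ln_mult_pos) auto
    thus ?thesis using Cpos assms(3) by (simp add: ln_div)
  qed
  ultimately have part1: "bhatt_dist M p q \<le> ln (C / 2) + ln (1 / (1 - \<delta>))"
    unfolding bhatt_dist_def by linarith
  have ch: "C / 2 = cosh (\<epsilon>/2)" unfolding C_def cosh_def by (simp add: exp_minus)
  have l1: "ln (C/2) \<le> \<epsilon>^2/8" unfolding ch using lncosh[of "\<epsilon>/2"] assms(1)
    by (simp add: power_divide)
  have "C/2 \<le> exp (\<epsilon>/2)" unfolding C_def using assms(1) by simp
  hence l2: "ln (C/2) \<le> \<epsilon>/2" using Cpos by (metis half_gt_zero ln_exp ln_le_cancel_iff exp_gt_zero)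
  have "ln (1 / (1 - \<delta>)) \<le> 1 / (1 - \<delta>) - 1" using assms(3) by (intro ln_le_minus_one) simp
  also have "\<dots> = \<delta> / (1 - \<delta>)" using assms(3) by (simp add: field_simps)
  finally have l3: "ln (1 / (1 - \<delta>)) \<le> \<delta> / (1 - \<delta>)" .
  have "ln (C/2) \<le> min (\<epsilon>\<^sup>2 / 8) (\<epsilon> / 2)" using l1 l2 by simp
  hence part2: "ln (C/2) + ln (1 / (1 - \<delta>)) \<le> min (\<epsilon>\<^sup>2 / 8) (\<epsilon> / 2) + \<delta> / (1 - \<delta>)"
    using l3 by linarith
  show ?thesis using part1 part2 unfolding C_def by simp
qed

end
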